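(* There is a polynomial $p$ such that the following holds for all $N\geq1$, all $\delta\in(0,1]$ and all $\varepsilon>0$. Let $V$ be a finite nonempty subset of $\mathbb{R}^N$ such that for every $v\in V$ the closed Euclidean ball $B(v,1)$ contains at least $\delta|V|$ points of $V$. Then there is a set $X\subseteq V$ with $|X|\leq p(1/\delta,1/\varepsilon)$ such that $V\subseteq\bigcup_{x\in X}B(x,1+\varepsilon)$.
   Context: $B(v,r)$ denotes the closed Euclidean ball of radius $r$ centered at $v$. The polynomial $p$ does not depend on $N$ or $V$. *)

theory Defs
  imports Complex_Main
begin

definition is_poly2 :: "(real \<Rightarrow> real \<Rightarrow> real) \<Rightarrow> bool" where
  "is_poly2 p \<longleftrightarrow> (\<exists>(d::nat) (c::nat \<Rightarrow> nat \<Rightarrow> real).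
     \<forall>a b. p a b = (\<Sum>i\<le>d. \<Sum>j\<le>d. c i j * a ^ i * b ^ j))"

text \<open>R^N, represented as real sequences vanishing at indices \<ge> N.\<close>
definition RN :: "nat \<Rightarrow> (nat \<Rightarrow> real) set" where
  "RN N = {v. \<forall>i\<ge>N. v i = 0}"

definition distN :: "nat \<Rightarrow> (nat \<Rightarrow> real) \<Rightarrow> (nat \<Rightarrow> real) \<Rightarrow> real" where
  "distN N v w = sqrt (\<Sum>i<N. (v i - w i)^2)"

definition cballN :: "nat \<Rightarrow> (nat \<Rightarrow> real) \<Rightarrow> real \<Rightarrow> (nat \<Rightarrow> real) set" where
  "cballN N v r = {w \<in> RN N. distN N v w \<le> r}"

end

theory Submission
  imports Defs "HOL-Analysis.Analysis"
begin


lemma binom_ext: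
  fixes a :: real
  assumes "n \<le> m"
  shows "(\<Sum>k\<le>m. real (n choose k) * a ^ k) = (a + 1) ^ n"
proof -
  have "(\<Sum>k\<le>m. real (n choose k) * a ^ k) = (\<Sum>k\<le>n. real (n choose k) * a ^ k)"
    by (rule sum.mono_neutral_right) (use assms in auto)
  also have "\<dots> = (a + 1) ^ n" using binomial_ring[of a 1 n] by simp
  finally show ?thesis .
qed

lemma poly_is_poly2:
  "is_poly2 (\<lambda>a b. C * (a + 1) ^ 3 * (b + 1) ^ 8)"
  unfolding is_poly2_def
proof (intro exI allI)
  fix a b :: real
  have "(\<Sum>i\<le>8. \<Sum>j\<le>8. (C * real (3 choose i) * real (8 choose j)) * a ^ i * b ^ j)
      = (\<Sum>i\<le>8. (C * real (3 choose i) * a ^ i) * (\<Sum>j\<le>(8::nat). real (8 choose j) * b ^ j))"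
    by (rule sum.cong[OF refl], subst sum_distrib_left, rule sum.cong[OF refl]) (simp add: mult_ac)
  also have "\<dots> = C * (\<Sum>i\<le>8. real (3 choose i) * a ^ i) * (\<Sum>j\<le>(8::nat). real (8 choose j) * b ^ j)"
    by (subst sum_distrib_right[symmetric], subst sum_distrib_left) (simp add: mult_ac)
  also have "\<dots> = C * (a + 1) ^ 3 * (b + 1) ^ 8"
    by (simp add: binom_ext)
  finally show "C * (a + 1) ^ 3 * (b + 1) ^ 8 =
     (\<Sum>i\<le>8. \<Sum>j\<le>8. (\<lambda>i j. C * real (3 choose i) * real (8 choose j)) i j * a ^ i * b ^ j)"
    by simp
qed

definition ipA :: "nat set \<Rightarrow> (nat\<Rightarrow>real) \<Rightarrow> (nat\<Rightarrow>real) \<Rightarrow> real" where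
  "ipA A x y = (\<Sum>j\<in>A. x j * y j)"

definition Wsum :: "('e \<Rightarrow> nat \<Rightarrow> real) \<Rightarrow> ('e \<Rightarrow> bool) \<Rightarrow> 'e list \<Rightarrow> nat \<Rightarrow> real" where
  "Wsum \<phi> lab L = (\<lambda>j. sum_list (map (\<lambda>e. (if lab e then 1 else -1) * \<phi> e j) L))"

lemma Wsum_Cons: "Wsum \<phi> lab (e # L) = (\<lambda>j. (if lab e then 1 else -1) * \<phi> e j + Wsum \<phi> lab L j)"
  by (simp add: Wsum_def)

lemma ipA_CS: "(ipA A x y)^2 \<le> ipA A x x * ipA A y y"
  unfolding ipA_def using Cauchy_Schwarz_ineq_sum[of x y A] by (simp add: power2_eq_square)

lemma ipA_nonneg: "0 \<le> ipA A x x"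
  unfolding ipA_def by (simp add: sum_nonneg)

lemma ipA_add_left: "ipA A (\<lambda>j. s * p j + W j) z = s * ipA A p z + ipA A W z"
  unfolding ipA_def by (simp add: algebra_simps sum.distrib sum_distrib_left)

lemma ipA_sq_update: "ipA A (\<lambda>j. s * p j + W j) (\<lambda>j. s * p j + W j)
   = s^2 * ipA A p p + 2 * s * ipA A W p + ipA A W W"
  unfolding ipA_def by (simp add: algebra_simps sum.distrib sum_distrib_left power2_eq_square)

lemma ipA_comm: "ipA A x y = ipA A y x"
  unfolding ipA_def by (simp add: mult.commute)

lemma perceptron:
  fixes E :: "'e set" and \<phi> :: "'e \<Rightarrow> nat \<Rightarrow> real"
  assumes gpos: "\<gamma> > 0" and R2: "R2 \<ge> 0"
    and R: "\<forall>e\<in>E. ipA A (\<phi> e) (\<phi> e) \<le> R2"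
    and Mg: "\<forall>e\<in>E. (if lab e then ipA A (\<phi> e) w else - ipA A (\<phi> e) w) \<ge> \<gamma>"
    and B: "ipA A w w \<le> B"
  shows "\<exists>L. set L \<subseteq> E \<and> real (length L) \<le> R2 * B / \<gamma>^2 \<and>
     (\<forall>e\<in>E. if lab e then ipA A (Wsum \<phi> lab L) (\<phi> e) > 0 else ipA A (Wsum \<phi> lab L) (\<phi> e) \<le> 0)"
proof (rule ccontr)
  define X where "X = R2 * B / \<gamma>^2"
  define ok where "ok L \<longleftrightarrow> (\<forall>e\<in>E. if lab e then ipA A (Wsum \<phi> lab L) (\<phi> e) > 0 else ipA A (Wsum \<phi> lab L) (\<phi> e) \<le> 0)" for L
  assume "\<not> ?thesis"
  hence nok: "\<And>L. set L \<subseteq> E \<Longrightarrow> real (length L) \<le> X \<Longrightarrow> \<not> ok L"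
    unfolding ok_def X_def by blast
  have main: "real k \<le> X + 1 \<longrightarrow> (\<exists>L. set L \<subseteq> E \<and> length L = k \<and>
      ipA A (Wsum \<phi> lab L) w \<ge> k * \<gamma> \<and> ipA A (Wsum \<phi> lab L) (Wsum \<phi> lab L) \<le> k * R2)" for k
  proof (induction k)
    case 0
    show ?case by (rule impI, rule exI[of _ "[]"]) (simp add: Wsum_def ipA_def)
  next
    case (Suc k)
    show ?case
    proof
      assume "real (Suc k) \<le> X + 1"
      hence kX: "real k \<le> X" by simp
      with Suc obtain L where L: "set L \<subseteq> E" "length L = k"
        "ipA A (Wsum \<phi> lab L) w \<ge> k * \<gamma>" "ipA A (Wsum \<phi> lab L) (Wsum \<phi> lab L) \<le> k * R2"
        by auto
      from nok[OF L(1)] kX L(2) have "\<not> ok L" by simp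
      then obtain e where e: "e \<in> E" and mis:
        "if lab e then ipA A (Wsum \<phi> lab L) (\<phi> e) \<le> 0 else ipA A (Wsum \<phi> lab L) (\<phi> e) > 0"
        unfolding ok_def by (auto split: if_splits)
      define s :: real where "s = (if lab e then 1 else -1)"
      have s2: "s^2 = 1" by (simp add: s_def)
      have W': "Wsum \<phi> lab (e # L) = (\<lambda>j. s * \<phi> e j + Wsum \<phi> lab L j)"
        by (simp add: Wsum_Cons s_def)
      have m1: "s * ipA A (\<phi> e) w \<ge> \<gamma>" using Mg e by (auto simp: s_def split: if_splits)
      have m2: "s * ipA A (Wsum \<phi> lab L) (\<phi> e) \<le> 0" using mis by (auto simp: s_def split: if_splits)
      have r: "ipA A (\<phi> e) (\<phi> e) \<le> R2" using R e by auto
      show "\<exists>L. set L \<subseteq> E \<and> length L = Suc k \<and>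
      ipA A (Wsum \<phi> lab L) w \<ge> real (Suc k) * \<gamma> \<and> ipA A (Wsum \<phi> lab L) (Wsum \<phi> lab L) \<le> real (Suc k) * R2"
      proof (intro exI[of _ "e # L"] conjI)
        show "set (e # L) \<subseteq> E" using e L by auto
        show "length (e # L) = Suc k" using L by simp
        show "ipA A (Wsum \<phi> lab (e # L)) w \<ge> real (Suc k) * \<gamma>"
          unfolding W' ipA_add_left using m1 L(3) by (simp add: algebra_simps)
        show "ipA A (Wsum \<phi> lab (e # L)) (Wsum \<phi> lab (e # L)) \<le> real (Suc k) * R2"
          unfolding W' ipA_sq_update s2 using m2 L(4) r by (simp add: algebra_simps)
      qed
    qed
  qed
  define k where "k = nat \<lfloor>X\<rfloor> + 1"
  have kX1: "real k \<le> X + 1" "real k > X" "k > 0"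
  proof -
    have "X \<ge> 0" unfolding X_def using R2 B ipA_nonneg[of A w] by (auto intro!: divide_nonneg_pos mult_nonneg_nonneg)
    thus "real k \<le> X + 1" "real k > X" "k > 0" unfolding k_def by linarith+
  qed
  from main[of k] kX1 obtain L where L: "set L \<subseteq> E" "length L = k"
      "ipA A (Wsum \<phi> lab L) w \<ge> k * \<gamma>" "ipA A (Wsum \<phi> lab L) (Wsum \<phi> lab L) \<le> k * R2"
    by auto
  have "(k * \<gamma>)^2 \<le> (ipA A (Wsum \<phi> lab L) w)^2"
    using L(3) gpos by (intro power_mono) auto
  also have "\<dots> \<le> ipA A (Wsum \<phi> lab L) (Wsum \<phi> lab L) * ipA A w w" by (rule ipA_CS)
  also have "\<dots> \<le> (k * R2) * B"
    using L(4) B ipA_nonneg[of A w] ipA_nonneg[of A "Wsum \<phi> lab L"]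
    by (meson mult_mono order_trans)
  finally have "real k * real k * \<gamma>^2 \<le> real k * (R2 * B)" by (simp add: power2_eq_square algebra_simps)
  hence "real k * \<gamma>^2 \<le> R2 * B" using kX1(3) by (simp add: mult_le_cancel_left)
  hence "real k \<le> X" unfolding X_def using gpos by (simp add: field_simps)
  with kX1 show False by simp
qed



definition sw :: "nat set \<Rightarrow> (nat \<Rightarrow> 'a) \<times> (nat \<Rightarrow> 'a) \<Rightarrow> (nat \<Rightarrow> 'a) \<times> (nat \<Rightarrow> 'a)" where
  "sw s c = ((\<lambda>i. if i \<in> s then snd c i else fst c i), (\<lambda>i. if i \<in> s then fst c i else snd c i))"

lemma sw_sw[simp]: "sw s (sw s c) = c"
  by (simp add: sw_def prod_eq_iff fun_eq_iff)

lemma sw_in_C: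
  assumes "c \<in> (PiE {..<t} (\<lambda>_. V)) \<times> (PiE {..<t} (\<lambda>_. V))" "s \<subseteq> {..<t}"
  shows "sw s c \<in> (PiE {..<t} (\<lambda>_. V)) \<times> (PiE {..<t} (\<lambda>_. V))"
  using assms by (auto simp: sw_def PiE_def extensional_def Pi_def)

lemma swap_count_single:
  fixes H :: "(nat \<Rightarrow> 'a) \<times> (nat \<Rightarrow> 'a) \<Rightarrow> 'a \<Rightarrow> bool"
  assumes Hinv: "\<And>s c. s \<subseteq> U \<Longrightarrow> H (sw s c) = H c"
    and U: "U = {..<t} - I"
    and P: "P = {c. (\<forall>i<t. \<not> H c (fst c i)) \<and> q \<le> card {i. i < t \<and> i \<notin> I \<and> H c (snd c i)}}"
  shows "card {s \<in> Pow U. sw s c \<in> P} * 2^q \<le> 2 ^ card U"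
proof (cases "{s \<in> Pow U. sw s c \<in> P} = {}")
  case True then show ?thesis by (simp only: True card.empty)
next
  case False
  then obtain s0 where s0: "s0 \<subseteq> U" "sw s0 c \<in> P" by auto
  have fU: "finite U" using U by auto
  define A where "A = {i\<in>U. H c (fst c i) \<noteq> H c (snd c i)}"
  have AU: "A \<subseteq> U" by (auto simp: A_def)
  have key: "i \<in> s \<longleftrightarrow> H c (fst c i)" if "s \<subseteq> U" "sw s c \<in> P" "i \<in> A" for s i
  proof -
    have it: "i < t" using that(3) U by (auto simp: A_def)
    have "\<not> H (sw s c) (fst (sw s c) i)" using that(2) it P by auto
    hence "\<not> H c (if i \<in> s then snd c i else fst c i)" using Hinv[OF that(1)] by (simp add: sw_def)
    thus ?thesis using that(3) by (auto simp: A_def split: if_splits)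
  qed
  have sub: "{s \<in> Pow U. sw s c \<in> P} \<subseteq> {s \<in> Pow U. s \<inter> A = s0 \<inter> A}"
  proof safe
    fix s i assume "s \<subseteq> U" "sw s c \<in> P" "i \<in> s" "i \<in> A"
    thus "i \<in> s0" using key[of s i] key[OF s0 \<open>i\<in>A\<close>] by auto
  next
    fix s i assume "s \<subseteq> U" "sw s c \<in> P" "i \<in> s0" "i \<in> A"
    thus "i \<in> s" using key[of s i] key[OF s0 \<open>i\<in>A\<close>] by auto
  qed
  have bij: "bij_betw (\<lambda>s. s - A) {s \<in> Pow U. s \<inter> A = s0 \<inter> A} (Pow (U - A))"
  proof (rule bij_betw_byWitness[where f'="\<lambda>s. s \<union> (s0 \<inter> A)"])
    show "\<forall>a\<in>{s \<in> Pow U. s \<inter> A = s0 \<inter> A}. a - A \<union> s0 \<inter> A = a" by blast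
    show "\<forall>a'\<in>Pow (U - A). a' \<union> s0 \<inter> A - A = a'" by blast
    show "(\<lambda>s. s - A) ` {s \<in> Pow U. s \<inter> A = s0 \<inter> A} \<subseteq> Pow (U - A)" by blast
    show "(\<lambda>s. s \<union> s0 \<inter> A) ` Pow (U - A) \<subseteq> {s \<in> Pow U. s \<inter> A = s0 \<inter> A}" using s0 by blast
  qed
  have c1: "card {s \<in> Pow U. s \<inter> A = s0 \<inter> A} = 2 ^ card (U - A)"
    using bij_betw_same_card[OF bij] fU by (simp add: card_Pow)
  have c2: "card {s \<in> Pow U. sw s c \<in> P} \<le> 2 ^ card (U - A)"
    using card_mono[OF _ sub] fU c1 by simp
  have Kq: "q \<le> card A"
  proof -
    define K where "K = {i. i < t \<and> i \<notin> I \<and> H (sw s0 c) (snd (sw s0 c) i)}"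
    have qK: "q \<le> card K" using s0(2) P K_def by auto
    have KA: "K \<subseteq> A"
    proof
      fix i assume "i \<in> K"
      hence i: "i < t" "i \<notin> I" "H c (if i \<in> s0 then fst c i else snd c i)"
        using Hinv[OF s0(1)] by (auto simp: K_def sw_def)
      have "\<not> H c (if i \<in> s0 then snd c i else fst c i)"
        using s0(2) P i(1) Hinv[OF s0(1)] by (auto simp: sw_def)
      with i show "i \<in> A" using U by (auto simp: A_def split: if_splits)
    qed
    have "finite A" using AU fU finite_subset by blast
    from card_mono[OF this KA] qK show ?thesis by simp
  qed
  have fA: "finite A" using AU fU finite_subset by blast
  have cU: "card (U - A) + card A = card U"
    using AU fU fA by (simp add: card_Diff_subset card_mono)
  have "(2::nat) ^ card (U - A) * 2 ^ q = 2 ^ (card (U - A) + q)" by (simp add: power_add)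
  also have "\<dots> \<le> 2 ^ (card (U - A) + card A)" using Kq by (intro power_increasing) auto
  finally have "2 ^ card (U - A) * 2 ^ q \<le> (2::nat) ^ card U" using cU by simp
  thus ?thesis by (rule le_trans[OF mult_le_mono1[OF c2]])
qed

lemma card_filter_sum: "finite A \<Longrightarrow> card {x\<in>A. Q x} = (\<Sum>x\<in>A. if Q x then 1 else 0::nat)"
proof (induction rule: finite_induct)
  case (insert x F)
  have "{y \<in> insert x F. Q y} = (if Q x then insert x {y\<in>F. Q y} else {y\<in>F. Q y})" by auto
  thus ?case using insert by simp
qed simp

lemma swap_count:
  fixes H :: "(nat \<Rightarrow> 'a) \<times> (nat \<Rightarrow> 'a) \<Rightarrow> 'a \<Rightarrow> bool"
  assumes Hinv: "\<And>s c. s \<subseteq> U \<Longrightarrow> H (sw s c) = H c"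
    and U: "U = {..<t} - I"
    and P: "P = {c \<in> C. (\<forall>i<t. \<not> H c (fst c i)) \<and> q \<le> card {i. i < t \<and> i \<notin> I \<and> H c (snd c i)}}"
    and C: "C = (PiE {..<t} (\<lambda>_. V)) \<times> (PiE {..<t} (\<lambda>_. V))"
    and fV: "finite V"
  shows "card P * 2^q \<le> card C"
proof -
  define P' where "P' = {c. (\<forall>i<t. \<not> H c (fst c i)) \<and> q \<le> card {i. i < t \<and> i \<notin> I \<and> H c (snd c i)}}"
  have PP: "P = C \<inter> P'" unfolding P P'_def by blast
  have fC: "finite C" using C fV by (simp add: finite_PiE)
  have fU: "finite U" using U by auto
  have each: "card P = card {c \<in> C. sw s c \<in> P}" if "s \<in> Pow U" for s
  proof -
    have sU: "s \<subseteq> {..<t}" using that U by auto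
    have "bij_betw (sw s) {c \<in> C. sw s c \<in> P} P"
    proof (rule bij_betw_byWitness[where f'="sw s"])
      show "\<forall>a\<in>{c \<in> C. sw s c \<in> P}. sw s (sw s a) = a" by simp
      show "\<forall>a'\<in>P. sw s (sw s a') = a'" by simp
      show "sw s ` {c \<in> C. sw s c \<in> P} \<subseteq> P" by blast
      show "sw s ` P \<subseteq> {c \<in> C. sw s c \<in> P}"
      proof
        fix d assume "d \<in> sw s ` P"
        then obtain c where c: "c \<in> P" "d = sw s c" by auto
        have "c \<in> C" using c PP by blast
        hence "sw s c \<in> C" using sw_in_C[OF _ sU, of c V] C by simp
        thus "d \<in> {c \<in> C. sw s c \<in> P}" using c by simp
      qed
    qed
    thus ?thesis by (simp add: bij_betw_same_card)
  qed
  have "2 ^ card U * card P = (\<Sum>s\<in>Pow U. card P)" by (simp add: card_Pow fU)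
  also have "\<dots> = (\<Sum>s\<in>Pow U. card {c \<in> C. sw s c \<in> P})" using each by simp
  also have "\<dots> = (\<Sum>s\<in>Pow U. \<Sum>c\<in>C. if sw s c \<in> P then 1 else 0)"
    using fC by (simp add: card_filter_sum)
  also have "\<dots> = (\<Sum>c\<in>C. \<Sum>s\<in>Pow U. if sw s c \<in> P then 1 else 0)" by (rule sum.swap)
  also have "\<dots> = (\<Sum>c\<in>C. card {s \<in> Pow U. sw s c \<in> P})"
    using fU by (intro sum.cong refl, subst card_filter_sum) auto
  finally have eq: "2 ^ card U * card P = (\<Sum>c\<in>C. card {s \<in> Pow U. sw s c \<in> P})" .
  have le: "card {s \<in> Pow U. sw s c \<in> P} * 2^q \<le> 2 ^ card U" for c
  proof -
    have "{s \<in> Pow U. sw s c \<in> P} \<subseteq> {s \<in> Pow U. sw s c \<in> P'}" using PP by blast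
    hence a1: "card {s \<in> Pow U. sw s c \<in> P} \<le> card {s \<in> Pow U. sw s c \<in> P'}"
      using fU by (intro card_mono) auto
    have a2: "card {s \<in> Pow U. sw s c \<in> P'} * 2^q \<le> 2 ^ card U"
      by (rule swap_count_single[OF Hinv U P'_def]) auto
    show ?thesis by (rule le_trans[OF mult_le_mono1[OF a1] a2])
  qed
  have "2 ^ card U * card P * 2^q = (\<Sum>c\<in>C. card {s \<in> Pow U. sw s c \<in> P} * 2^q)"
    using eq by (simp add: sum_distrib_right)
  also have "\<dots> \<le> (\<Sum>c\<in>C. 2 ^ card U)" by (rule sum_mono) (rule le)
  also have "\<dots> = 2 ^ card U * card C" by simp
  finally show ?thesis by (simp add: mult.assoc)
qed



lemma pow_bound:
  fixes \<delta> :: real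
  assumes "0 < \<delta>" "\<delta> \<le> 1" "real b * \<delta> \<ge> 2 * real q0"
  shows "2 * real q0 * (1 - \<delta>) ^ b \<le> 1"
proof -
  have "(1 - \<delta>) ^ b * (1 + \<delta>) ^ b = (1 - \<delta>^2) ^ b" by (simp add: power_mult_distrib[symmetric] power2_eq_square algebra_simps)
  also have "\<dots> \<le> 1" using assms by (intro power_le_one) (auto simp: power2_eq_square mult_le_one)
  finally have a: "(1 - \<delta>) ^ b * (1 + \<delta>) ^ b \<le> 1" .
  have "1 + real b * \<delta> \<le> (1 + \<delta>) ^ b" using Bernoulli_inequality[of \<delta> b] assms by simp
  hence "2 * real q0 \<le> (1 + \<delta>) ^ b" using assms by linarith
  hence "2 * real q0 * (1 - \<delta>) ^ b \<le> (1 + \<delta>) ^ b * (1 - \<delta>) ^ b"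
    using assms by (intro mult_right_mono) auto
  thus ?thesis using a by (simp add: mult.commute)
qed

lemma block_count:
  fixes V S :: "'a set"
  assumes fV: "finite V" and SV: "S \<subseteq> V" and dens: "real (card S) \<ge> \<delta> * real (card V)"
    and d: "0 < \<delta>" "\<delta> \<le> 1" and D: "real D * \<delta> \<ge> 1"
    and b: "b = 2 * q0 * D" and t: "t = q0 * b"
  shows "real (card V ^ t) \<le> 2 * real (card {ys \<in> PiE {..<t} (\<lambda>_. V). q0 \<le> card {i. i < t \<and> ys i \<in> S}})"
proof -
  define Xs where "Xs = PiE {..<t} (\<lambda>_. V)"
  define G where "G = {ys \<in> Xs. q0 \<le> card {i. i < t \<and> ys i \<in> S}}"
  define blk where "blk j = {j*b..<j*b+b}" for j
  define F where "F j = PiE {..<t} (\<lambda>i. if i \<in> blk j then V - S else V)" for j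
  define n where "n = card V"
  define s where "s = card S"
  have fS: "finite S" using fV SV finite_subset by blast
  have sn: "s \<le> n" unfolding s_def n_def using card_mono[OF fV SV] .
  have cXs: "card Xs = n ^ t" unfolding Xs_def n_def by (simp add: card_PiE)
  have fXs: "finite Xs" unfolding Xs_def using fV by (simp add: finite_PiE)
  have blk_t: "blk j \<subseteq> {..<t}" if "j < q0" for j
  proof -
    have "j * b + b \<le> q0 * b" using that by (metis Suc_leI add.commute mult_Suc mult_le_mono1)
    thus ?thesis unfolding blk_def t by auto
  qed
  have bad_sub: "Xs - G \<subseteq> (\<Union>j<q0. F j)"
  proof
    fix ys assume ys: "ys \<in> Xs - G"
    show "ys \<in> (\<Union>j<q0. F j)"
    proof (rule ccontr)
      assume nF: "ys \<notin> (\<Union>j<q0. F j)"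
      have hit: "\<exists>i\<in>blk j. ys i \<in> S" if "j < q0" for j
      proof (rule ccontr)
        assume "\<not> (\<exists>i\<in>blk j. ys i \<in> S)"
        hence "ys \<in> F j" using ys blk_t[OF that] unfolding F_def Xs_def by (auto simp: PiE_def Pi_def)
        thus False using nF that by auto
      qed
      define f where "f j = (SOME i. i \<in> blk j \<and> ys i \<in> S)" for j
      have f: "f j \<in> blk j \<and> ys (f j) \<in> S" if "j < q0" for j
        unfolding f_def by (rule someI_ex) (use hit[OF that] in blast)
      have bpos: "b > 0" using D d b t
      proof -
        have "D > 0" using D d by (cases "D = 0") auto
        have "q0 > 0"
        proof (rule ccontr)
          assume "\<not> q0 > 0" hence "q0 = 0" by simp
          thus False using ys unfolding G_def by auto
        qed
        thus ?thesis using b \<open>D > 0\<close> by simp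
      qed
      have divb: "i div b = j" if "i \<in> blk j" for i j
        using that bpos unfolding blk_def by (auto intro: div_nat_eqI simp: algebra_simps)
      have inj: "inj_on f {..<q0}"
      proof (rule inj_onI)
        fix x y assume "x \<in> {..<q0}" "y \<in> {..<q0}" "f x = f y"
        thus "x = y" using f divb by (metis lessThan_iff)
      qed
      have sub: "f ` {..<q0} \<subseteq> {i. i < t \<and> ys i \<in> S}" using f blk_t by auto
      have "q0 \<le> card {i. i < t \<and> ys i \<in> S}"
        using card_inj_on_le[OF inj sub] by simp
      thus False using ys unfolding G_def by auto
    qed
  qed
  have cF: "card (F j) = (n - s) ^ b * n ^ (t - b)" if "j < q0" for j
  proof -
    have "card (F j) = (\<Prod>i<t. card (if i \<in> blk j then V - S else V))"
      unfolding F_def by (simp add: card_PiE)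
    also have "\<dots> = (\<Prod>i<t. if i \<in> blk j then n - s else n)"
      using card_Diff_subset[OF fS SV] by (intro prod.cong) (auto simp: n_def s_def)
    also have "\<dots> = (n - s) ^ card ({..<t} \<inter> blk j) * n ^ card ({..<t} - blk j)"
      by (simp add: prod.If_cases Int_commute Diff_eq)
    also have "card ({..<t} \<inter> blk j) = b" using blk_t[OF that] by (simp add: Int_absorb1 blk_def)
    also have "card ({..<t} - blk j) = t - b" using blk_t[OF that] by (simp add: card_Diff_subset blk_def)
    finally show ?thesis .
  qed
  have "card (Xs - G) \<le> card (\<Union>j<q0. F j)"
    using bad_sub by (intro card_mono) (auto simp: F_def fV finite_PiE)
  also have "\<dots> \<le> (\<Sum>j<q0. card (F j))" by (rule card_UN_le) simp
  also have "\<dots> = q0 * ((n - s) ^ b * n ^ (t - b))" using cF by simp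
  finally have cbad: "real (card (Xs - G)) \<le> real q0 * (real (n - s) ^ b * real n ^ (t - b))"
    by (metis of_nat_le_iff of_nat_mult of_nat_power)
  have ns: "real (n - s) \<le> (1 - \<delta>) * real n"
    using dens sn unfolding n_def s_def by (simp add: of_nat_diff algebra_simps)
  have bt: "b \<le> t"
  proof (cases "q0 = 0")
    case True thus ?thesis using b t by simp
  next
    case False thus ?thesis using t by simp
  qed
  have "real (n - s) ^ b \<le> ((1 - \<delta>) * real n) ^ b" using ns by (intro power_mono) auto
  hence "real q0 * (real (n - s) ^ b * real n ^ (t - b)) \<le> real q0 * (((1 - \<delta>) * real n) ^ b * real n ^ (t - b))"
    by (intro mult_left_mono mult_right_mono) auto
  also have "\<dots> = real q0 * (1 - \<delta>) ^ b * real n ^ t"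
    using bt by (simp add: power_mult_distrib power_add[symmetric])
  also have "\<dots> \<le> real n ^ t / 2"
  proof -
    have "real b * \<delta> \<ge> 2 * real q0"
    proof -
      have "real b * \<delta> = 2 * real q0 * (real D * \<delta>)" using b by simp
      also have "\<dots> \<ge> 2 * real q0" using D by (simp add: mult_le_cancel_left1)
      finally show ?thesis .
    qed
    hence "2 * real q0 * (1 - \<delta>) ^ b \<le> 1" using pow_bound d by blast
    hence "(2 * real q0 * (1 - \<delta>) ^ b) * real n ^ t \<le> 1 * real n ^ t"
      by (intro mult_right_mono) auto
    thus ?thesis by (simp add: field_simps)
  qed
  finally have "real (card (Xs - G)) \<le> real n ^ t / 2" using cbad by linarith
  moreover have "card (Xs - G) = card Xs - card G" using fXs by (intro card_Diff_subset) (auto simp: G_def intro: finite_subset)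
  moreover have "card G \<le> card Xs" using fXs by (intro card_mono) (auto simp: G_def)
  ultimately have "real n ^ t \<le> 2 * real (card G)" using cXs by (simp add: of_nat_diff)
  thus ?thesis unfolding G_def Xs_def n_def by simp
qed



definition sq :: "nat \<Rightarrow> (nat \<Rightarrow> real) \<Rightarrow> (nat \<Rightarrow> real) \<Rightarrow> real" where
  "sq N u v = (\<Sum>i<N. (u i - v i)^2)"

lemma sq_nonneg: "0 \<le> sq N u v" unfolding sq_def by (simp add: sum_nonneg)
lemma sq_sym: "sq N u v = sq N v u" unfolding sq_def by (simp add: power2_commute)
lemma distN_sq: "distN N u v = sqrt (sq N u v)" by (simp add: distN_def sq_def)

lemma distN_le_iff: "r \<ge> 0 \<Longrightarrow> distN N u v \<le> r \<longleftrightarrow> sq N u v \<le> r^2"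
  unfolding distN_sq using sq_nonneg[of N u v]
  by (metis real_le_lsqrt real_sqrt_le_iff real_sqrt_pow2 sqrt_le_D)

lemma distN_sym: "distN N u v = distN N v u" by (simp add: distN_sq sq_sym)

lemma distN_triangle: "distN N u w \<le> distN N u v + distN N v w"
proof -
  have "distN N u w = L2_set (\<lambda>i. (u i - v i) + (v i - w i)) {..<N}"
    by (simp add: distN_def L2_set_def)
  also have "\<dots> \<le> L2_set (\<lambda>i. u i - v i) {..<N} + L2_set (\<lambda>i. v i - w i) {..<N}"
    by (rule L2_set_triangle_ineq)
  also have "\<dots> = distN N u v + distN N v w" by (simp add: distN_def L2_set_def)
  finally show ?thesis .
qed

definition lift :: "nat \<Rightarrow> (nat \<Rightarrow> real) \<Rightarrow> (nat \<Rightarrow> real) \<Rightarrow> nat \<Rightarrow> real" where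
  "lift N a u = (\<lambda>j. if j < N then u j - a j else if j = N then sq N u a else 1)"

definition wst :: "nat \<Rightarrow> (nat \<Rightarrow> real) \<Rightarrow> (nat \<Rightarrow> real) \<Rightarrow> real \<Rightarrow> nat \<Rightarrow> real" where
  "wst N v a r2 = (\<lambda>j. if j < N then 2 * (v j - a j) else if j = N then -1 else r2 - sq N v a)"

lemma ipA_split: "ipA {..<Suc (Suc N)} x y = (\<Sum>j<N. x j * y j) + x N * y N + x (Suc N) * y (Suc N)"
  by (simp add: ipA_def)

lemma sq_expand: "sq N u v = sq N u a - 2 * (\<Sum>j<N. (u j - a j) * (v j - a j)) + sq N v a"
proof -
  have "sq N u v = (\<Sum>j<N. (u j - a j)^2 - 2 * ((u j - a j) * (v j - a j)) + (v j - a j)^2)"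
    unfolding sq_def by (rule sum.cong) (auto simp: power2_eq_square algebra_simps)
  also have "\<dots> = sq N u a - 2 * (\<Sum>j<N. (u j - a j) * (v j - a j)) + sq N v a"
    by (simp add: sq_def sum.distrib sum_subtractf sum_distrib_left)
  finally show ?thesis .
qed

lemma G1: "ipA {..<Suc (Suc N)} (lift N a u) (wst N v a r2) = r2 - sq N u v"
proof -
  have "(\<Sum>j<N. lift N a u j * wst N v a r2 j) = 2 * (\<Sum>j<N. (u j - a j) * (v j - a j))"
    unfolding sum_distrib_left by (rule sum.cong) (auto simp: lift_def wst_def algebra_simps)
  thus ?thesis unfolding ipA_split using sq_expand[of N u v a] by (simp add: lift_def wst_def)
qed

lemma G2: "ipA {..<Suc (Suc N)} (lift N a u) (lift N a u) = sq N u a + (sq N u a)^2 + 1"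
proof -
  have "(\<Sum>j<N. lift N a u j * lift N a u j) = sq N u a"
    by (simp add: lift_def sq_def power2_eq_square)
  thus ?thesis unfolding ipA_split by (simp add: lift_def power2_eq_square)
qed

lemma G3: "ipA {..<Suc (Suc N)} (wst N v a r2) (wst N v a r2) = 4 * sq N v a + 1 + (r2 - sq N v a)^2"
proof -
  have "(\<Sum>j<N. wst N v a r2 j * wst N v a r2 j) = 4 * sq N v a"
    unfolding sq_def sum_distrib_left by (rule sum.cong) (auto simp: wst_def power2_eq_square algebra_simps)
  thus ?thesis unfolding ipA_split by (simp add: wst_def power2_eq_square)
qed



definition pt :: "(nat \<Rightarrow> 'a) \<times> (nat \<Rightarrow> 'a) \<Rightarrow> nat \<times> bool \<Rightarrow> 'a" where
  "pt c e = (if snd e then snd c (fst e) else fst c (fst e))"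

definition hyp :: "nat \<Rightarrow> (nat \<Rightarrow> (nat \<Rightarrow> real)) \<times> (nat \<Rightarrow> (nat \<Rightarrow> real)) \<Rightarrow> (nat \<times> bool) \<times> (nat \<times> bool) list \<Rightarrow> (nat \<Rightarrow> real) \<Rightarrow> bool" where
  "hyp N c \<kappa> u = (sq N u (pt c (fst \<kappa>)) \<le> 9 \<and>
     ipA {..<Suc (Suc N)} (Wsum (\<lambda>e. lift N (pt c (fst \<kappa>)) (pt c e)) snd (snd \<kappa>)) (lift N (pt c (fst \<kappa>)) u) > 0)"

definition Ik :: "(nat \<times> bool) \<times> (nat \<times> bool) list \<Rightarrow> nat set" where
  "Ik \<kappa> = insert (fst (fst \<kappa>)) (fst ` set (snd \<kappa>))"

lemma pt_sw: "fst e \<notin> s \<Longrightarrow> pt (sw s c) e = pt c e"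
  by (simp add: pt_def sw_def)

lemma hyp_sw: assumes "s \<inter> Ik \<kappa> = {}" shows "hyp N (sw s c) \<kappa> = hyp N c \<kappa>"
proof -
  have a: "pt (sw s c) (fst \<kappa>) = pt c (fst \<kappa>)" using assms by (intro pt_sw) (auto simp: Ik_def)
  have b: "map (\<lambda>e. (if snd e then 1 else -1) * lift N (pt c (fst \<kappa>)) (pt (sw s c) e) j) (snd \<kappa>)
         = map (\<lambda>e. (if snd e then 1 else -1) * lift N (pt c (fst \<kappa>)) (pt c e) j) (snd \<kappa>)" for j
  proof -
    have "\<forall>e\<in>set (snd \<kappa>). fst e \<notin> s" using assms by (auto simp: Ik_def)
    thus ?thesis by (intro map_cong refl) (simp add: pt_sw)
  qed
  show ?thesis unfolding hyp_def a Wsum_def b ..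
qed

lemma card_Ik: "card (Ik \<kappa>) \<le> Suc (length (snd \<kappa>))"
proof -
  have "card (Ik \<kappa>) \<le> Suc (card (fst ` set (snd \<kappa>)))" unfolding Ik_def by (rule card_insert_le_m1) auto
  also have "card (fst ` set (snd \<kappa>)) \<le> length (snd \<kappa>)"
    using card_image_le[of "set (snd \<kappa>)" fst] card_length[of "snd \<kappa>"] by simp
  finally show ?thesis by simp
qed

lemma bad_code:
  fixes c :: "(nat \<Rightarrow> (nat \<Rightarrow> real)) \<times> (nat \<Rightarrow> (nat \<Rightarrow> real))"
  assumes e: "0 < \<epsilon>" "\<epsilon> \<le> 1"
    and M: "M = nat \<lfloor>1001 / \<epsilon>^2\<rfloor>"
    and far: "\<forall>i<t. \<not> distN N (fst c i) v \<le> 1 + \<epsilon>"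
    and many: "q0 \<le> card {i. i < t \<and> distN N v (snd c i) \<le> 1}"
    and q0: "q0 = q + M + 1"
  shows "\<exists>\<kappa>. fst (fst \<kappa>) < t \<and> set (snd \<kappa>) \<subseteq> {..<t} \<times> UNIV \<and> length (snd \<kappa>) \<le> M \<and>
     (\<forall>i<t. \<not> hyp N c \<kappa> (fst c i)) \<and> q \<le> card {i. i < t \<and> i \<notin> Ik \<kappa> \<and> hyp N c \<kappa> (snd c i)}"
proof -
  define Pos where "Pos = {i. i < t \<and> distN N v (snd c i) \<le> 1}"
  have fPos: "finite Pos" unfolding Pos_def by auto
  have "Pos \<noteq> {}" using many q0 unfolding Pos_def by (metis card.empty le_zero_eq add_is_0 one_neq_zero)
  then obtain i0 where i0: "i0 \<in> Pos" by auto
  define a where "a = snd c i0"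
  have va: "sq N v a \<le> 1" using i0 distN_le_iff[of 1 N v a] by (simp add: Pos_def a_def)
  define r2 :: real where "r2 = (1 + \<epsilon>/2)^2"
  define E where "E = {(i, False) | i. i < t \<and> sq N (fst c i) a \<le> 9} \<union> {(i, True) | i. i \<in> Pos}"
  define \<phi> where "\<phi> e = lift N a (pt c e)" for e
  define w where "w = wst N v a r2"
  have posclose: "sq N (snd c i) a \<le> 4" if "i \<in> Pos" for i
  proof -
    have "distN N (snd c i) a \<le> distN N (snd c i) v + distN N v a" by (rule distN_triangle)
    also have "\<dots> \<le> 2" using that i0 by (simp add: Pos_def a_def distN_sym)
    finally show ?thesis using distN_le_iff[of 2] by simp
  qed
  have Ein: "sq N (pt c e) a \<le> 9" if "e \<in> E" for e
    using that by (auto simp: E_def pt_def dest!: posclose)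
  have R: "\<forall>e\<in>E. ipA {..<Suc (Suc N)} (\<phi> e) (\<phi> e) \<le> 91"
  proof
    fix e assume "e \<in> E"
    hence h: "sq N (pt c e) a \<le> 9" "0 \<le> sq N (pt c e) a" using Ein sq_nonneg by auto
    hence "(sq N (pt c e) a)^2 \<le> 81" using power_mono[OF h(1) h(2), of 2] by simp
    thus "ipA {..<Suc (Suc N)} (\<phi> e) (\<phi> e) \<le> 91" unfolding \<phi>_def G2 using h by simp
  qed
  have Mg: "\<forall>e\<in>E. (if snd e then ipA {..<Suc (Suc N)} (\<phi> e) w else - ipA {..<Suc (Suc N)} (\<phi> e) w) \<ge> \<epsilon>"
  proof
    fix e assume eE: "e \<in> E"
    show "(if snd e then ipA {..<Suc (Suc N)} (\<phi> e) w else - ipA {..<Suc (Suc N)} (\<phi> e) w) \<ge> \<epsilon>"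
    proof (cases "snd e")
      case True
      then obtain i where i: "e = (i, True)" "i \<in> Pos" using eE by (auto simp: E_def)
      have "sq N (snd c i) v \<le> 1" using i distN_le_iff[of 1 N v] by (simp add: Pos_def sq_sym)
      moreover have "r2 - 1 \<ge> \<epsilon>" using e by (simp add: r2_def power2_eq_square algebra_simps)
      ultimately show ?thesis using True i unfolding \<phi>_def w_def G1 by (simp add: pt_def)
    next
      case False
      then obtain i where i: "e = (i, False)" "i < t" using eE by (auto simp: E_def)
      have "\<not> sq N (fst c i) v \<le> (1+\<epsilon>)^2" using far i distN_le_iff[of "1+\<epsilon>" N "fst c i" v] e by simp
      moreover have "(1+\<epsilon>)^2 - r2 \<ge> \<epsilon>" using e by (simp add: r2_def power2_eq_square algebra_simps)
      ultimately show ?thesis using False i unfolding \<phi>_def w_def G1 by (simp add: pt_def)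
    qed
  qed
  have B: "ipA {..<Suc (Suc N)} w w \<le> 11"
  proof -
    have s0: "0 \<le> sq N v a" by (rule sq_nonneg)
    have ee: "\<epsilon> * \<epsilon> \<le> 1" using e mult_le_one[of \<epsilon> \<epsilon>] by simp
    have r: "1 \<le> r2" "r2 \<le> 9/4" using e ee by (auto simp: r2_def power2_eq_square algebra_simps)
    have "(r2 - sq N v a)^2 \<le> (9/4)^2"
      using r va s0 by (intro power_mono) auto
    thus ?thesis unfolding w_def G3 using va by (simp add: power2_eq_square)
  qed
  obtain L where L: "set L \<subseteq> E" "real (length L) \<le> 91 * 11 / \<epsilon>^2"
    "\<forall>e\<in>E. if snd e then ipA {..<Suc (Suc N)} (Wsum \<phi> snd L) (\<phi> e) > 0 else ipA {..<Suc (Suc N)} (Wsum \<phi> snd L) (\<phi> e) \<le> 0"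
    using perceptron[of \<epsilon> 91 E "{..<Suc (Suc N)}" \<phi> snd w 11] e R Mg B by auto
  define \<kappa> where "\<kappa> = ((i0, True), L)"
  have pta: "pt c (fst \<kappa>) = a" by (simp add: \<kappa>_def pt_def a_def)
  have lenL: "length L \<le> M"
  proof -
    have "real (length L) \<le> 1001 / \<epsilon>^2" using L(2) by simp
    thus ?thesis unfolding M by (simp add: le_nat_floor)
  qed
  have hypeq: "hyp N c \<kappa> u = (sq N u a \<le> 9 \<and> ipA {..<Suc (Suc N)} (Wsum \<phi> snd L) (lift N a u) > 0)" for u
  proof -
    have phiabs: "(\<lambda>e. lift N a (pt c e)) = \<phi>" by (rule ext) (simp add: \<phi>_def)
    show ?thesis unfolding hyp_def pta by (simp add: \<kappa>_def phiabs)
  qed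
  show ?thesis
  proof (intro exI[of _ \<kappa>] conjI allI impI)
    show "fst (fst \<kappa>) < t" using i0 by (simp add: \<kappa>_def Pos_def)
    show "set (snd \<kappa>) \<subseteq> {..<t} \<times> UNIV" using L(1) by (auto simp: \<kappa>_def E_def Pos_def)
    show "length (snd \<kappa>) \<le> M" using lenL by (simp add: \<kappa>_def)
  next
    fix i assume it: "i < t"
    show "\<not> hyp N c \<kappa> (fst c i)"
    proof
      assume h: "hyp N c \<kappa> (fst c i)"
      hence "(i, False) \<in> E" using it by (simp add: hypeq E_def)
      hence "ipA {..<Suc (Suc N)} (Wsum \<phi> snd L) (\<phi> (i, False)) \<le> 0" using L(3) by force
      thus False using h by (simp add: hypeq \<phi>_def pt_def)
    qed
  next
    have sub: "Pos - Ik \<kappa> \<subseteq> {i. i < t \<and> i \<notin> Ik \<kappa> \<and> hyp N c \<kappa> (snd c i)}"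
    proof
      fix i assume i: "i \<in> Pos - Ik \<kappa>"
      hence iE: "(i, True) \<in> E" by (simp add: E_def)
      hence "ipA {..<Suc (Suc N)} (Wsum \<phi> snd L) (\<phi> (i, True)) > 0" using L(3) by force
      moreover have "sq N (snd c i) a \<le> 9" using posclose i by force
      ultimately show "i \<in> {i. i < t \<and> i \<notin> Ik \<kappa> \<and> hyp N c \<kappa> (snd c i)}"
        using i by (simp add: hypeq \<phi>_def pt_def Pos_def)
    qed
    have cI: "card (Ik \<kappa>) \<le> M + 1" using card_Ik[of \<kappa>] lenL by (simp add: \<kappa>_def)
    have "card Pos - card (Ik \<kappa>) \<le> card (Pos - Ik \<kappa>)" by (rule diff_card_le_card_Diff) (simp add: Ik_def)
    also have "\<dots> \<le> card {i. i < t \<and> i \<notin> Ik \<kappa> \<and> hyp N c \<kappa> (snd c i)}"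
      by (rule card_mono[OF _ sub]) auto
    finally show "q \<le> card {i. i < t \<and> i \<notin> Ik \<kappa> \<and> hyp N c \<kappa> (snd c i)}"
      using many q0 cI unfolding Pos_def by linarith
  qed
qed



lemma pow4_le_exp: "16 \<le> n \<Longrightarrow> n^4 \<le> (2::nat)^n"
proof (induction n rule: dec_induct)
  case base show ?case by simp
next
  case (step n)
  have n1: "1 \<le> n" using step(1) by simp
  have p1: "n^2 \<le> n^3" using n1 by (intro power_increasing) auto
  have p2: "n \<le> n^3" using power_increasing[of 1 3 n] n1 by simp
  have p3: "1 \<le> n^3" using n1 by (simp add: one_le_power)
  have p4: "16*n^3 \<le> n*n^3" using step(1) by (rule mult_le_mono1)
  have p5: "n^4 = n*n^3" by (simp add: power_numeral_reduce)
  have "4*n^3 + 6*n^2 + 4*n + 1 \<le> n^4" using p1 p2 p3 p4 p5 by linarith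
  moreover have "(Suc n)^4 = n^4 + 4*n^3 + 6*n^2 + 4*n + 1"
    by (simp add: power_numeral_reduce algebra_simps)
  ultimately have "(Suc n)^4 \<le> 2 * n^4" by simp
  also have "\<dots> \<le> 2 * 2^n" using step by simp
  finally show ?case by simp
qed

lemma arith_main:
  fixes M D :: nat
  assumes D: "D \<ge> 1" and L: "L' = 8*(M+2)*D + 16" and q: "q = (M+2)*L'" and q0: "q0 = q + M + 1"
    and b: "b = 2*q0*D" and t: "t = q0*b"
  shows "4*t*(M+1)*(2*t)^M < 2^q"
proof -
  have L16: "L' \<ge> 16" using L by simp
  have Lpos: "L' \<ge> 1" using L by simp
  have bge: "b \<ge> 1" using b D q0 by simp
  have q0ge: "M + 1 \<le> q0" using q0 by simp
  have tge: "M + 1 \<le> t" using q0ge bge t by (metis le_trans mult_le_mono2 nat_mult_1_right)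
  have s2: "4*t*(M+1)*(2*t)^M \<le> (2*t)^(M+2)"
  proof -
    have "4*t*(M+1) \<le> 4*t*t" using tge by (rule mult_le_mono2)
    hence "4*t*(M+1)*(2*t)^M \<le> (4*t*t)*(2*t)^M" by (rule mult_right_mono) simp
    also have "\<dots> = (2*t)^(M+2)" by (simp add: power_add power2_eq_square algebra_simps)
    finally show ?thesis .
  qed
  have q0le: "q0 \<le> 2*(M+2)*L'"
  proof -
    have "(M+2)*1 \<le> (M+2)*L'" using Lpos by (rule mult_le_mono2)
    hence h: "M + 1 \<le> (M+2)*L'" by simp
    have "q0 \<le> (M+2)*L' + (M+2)*L'" using q0 q h by linarith
    also have "\<dots> = 2*(M+2)*L'" by simp
    finally show ?thesis .
  qed
  have t2: "2*t = 4*q0*q0*D" using t b by simp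
  have "4*q0*q0*D \<le> 4*(2*(M+2)*L')*(2*(M+2)*L')*D"
    using q0le by (intro mult_mono) auto
  also have "\<dots> = (16*(M+2)*(M+2)*D) * (L'*L')" by (simp add: algebra_simps)
  also have "\<dots> < (L'*L') * (L'*L')"
  proof (rule mult_strict_right_mono)
    have "16*(M+2)*(M+2)*D \<le> 16*(M+2)*(M+2)*D*D" using D by simp
    also have "\<dots> < (8*(M+2)*D + 16) * (8*(M+2)*D + 16)" by (simp add: algebra_simps)
    finally show "16*(M+2)*(M+2)*D < L'*L'" using L by simp
    show "0 < L'*L'" using Lpos by simp
  qed
  also have "\<dots> = L'^4" by (simp add: power_numeral_reduce)
  also have "\<dots> \<le> 2^L'" using pow4_le_exp L16 by simp
  finally have "2*t < 2^L'" by (simp only: t2)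
  hence "(2*t)^(M+2) < (2^L')^(M+2)" by (intro power_strict_mono) auto
  also have "\<dots> = 2^q" unfolding q by (simp only: power_mult[symmetric] mult.commute)
  finally show ?thesis using s2 by linarith
qed

lemma card_codes:
  assumes "t \<ge> 1" shows "card (({..<t} \<times> (UNIV::bool set)) \<times> {L. set L \<subseteq> {..<t} \<times> (UNIV::bool set) \<and> length L \<le> M})
     \<le> 2*t*((M+1)*(2*t)^M)"
proof -
  have cB: "card ({..<t} \<times> (UNIV::bool set)) = 2*t" by (simp add: card_cartesian_product)
  have "card {L. set L \<subseteq> {..<t} \<times> (UNIV::bool set) \<and> length L \<le> M} = (\<Sum>i\<le>M. (2*t)^i)"
    using card_lists_length_le[of "{..<t} \<times> (UNIV::bool set)" M] cB by simp
  also have "\<dots> \<le> (\<Sum>i\<le>M. (2*t)^M)"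
  proof (cases "t = 0")
    case True thus ?thesis using assms by simp
  next
    case False thus ?thesis by (intro sum_mono power_increasing) auto
  qed
  also have "\<dots> = (M+1)*(2*t)^M" by simp
  finally show ?thesis using cB by (simp add: card_cartesian_product)
qed



lemma main_cover:
  fixes V :: "(nat \<Rightarrow> real) set"
  assumes fV: "finite V" and Vne: "V \<noteq> {}" and d: "0 < \<delta>" "\<delta> \<le> 1" and e: "0 < \<epsilon>" "\<epsilon> \<le> 1"
    and dense: "\<forall>v\<in>V. real (card {u\<in>V. distN N v u \<le> 1}) \<ge> \<delta> * real (card V)"
    and M: "M = nat \<lfloor>1001 / \<epsilon>^2\<rfloor>" and D: "real D * \<delta> \<ge> 1"
    and L: "L' = 8*(M+2)*D + 16" and q: "q = (M+2)*L'" and q0: "q0 = q + M + 1"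
    and b: "b = 2*q0*D" and t: "t = q0*b"
  shows "\<exists>xs\<in>PiE {..<t} (\<lambda>_. V). \<forall>v\<in>V. \<exists>i<t. distN N (xs i) v \<le> 1 + \<epsilon>"
proof (rule ccontr)
  assume nt: "\<not> ?thesis"
  define Xs where "Xs = PiE {..<t} (\<lambda>_. V)"
  define C where "C = Xs \<times> Xs"
  have "\<forall>xs\<in>Xs. \<exists>v. v \<in> V \<and> (\<forall>i<t. \<not> distN N (xs i) v \<le> 1 + \<epsilon>)"
    using nt unfolding Xs_def by auto
  then obtain vf where vf: "\<And>xs. xs \<in> Xs \<Longrightarrow> vf xs \<in> V \<and> (\<forall>i<t. \<not> distN N (xs i) (vf xs) \<le> 1 + \<epsilon>)"
    by metis
  have D1: "D \<ge> 1" using D d by (cases "D = 0") auto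
  have tpos: "t \<ge> 1" using t b q0 D1 by simp
  define n where "n = card V"
  have npos: "n > 0" using fV Vne by (simp add: n_def card_gt_0_iff)
  have fXs: "finite Xs" unfolding Xs_def using fV by (simp add: finite_PiE)
  have cXs: "card Xs = n ^ t" unfolding Xs_def n_def by (simp add: card_PiE)
  have fC: "finite C" using fXs by (simp add: C_def)
  have cC: "card C = n^t * n^t" using cXs by (simp add: C_def card_cartesian_product)
  define Sv where "Sv v = {u\<in>V. distN N v u \<le> 1}" for v
  define Gd where "Gd v = {ys \<in> Xs. q0 \<le> card {i. i < t \<and> ys i \<in> Sv v}}" for v
  define Bad where "Bad = {c \<in> C. \<exists>v\<in>V. (\<forall>i<t. \<not> distN N (fst c i) v \<le> 1 + \<epsilon>) \<and>
                         q0 \<le> card {i. i < t \<and> distN N v (snd c i) \<le> 1}}"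
  have gd: "real (n ^ t) \<le> 2 * real (card (Gd v))" if "v \<in> V" for v
    unfolding Gd_def Xs_def n_def
    by (rule block_count[OF fV _ _ d D b t]) (use dense that in \<open>auto simp: Sv_def\<close>)
  have sig: "Sigma Xs (\<lambda>xs. Gd (vf xs)) \<subseteq> Bad"
  proof safe
    fix xs ys assume xs: "xs \<in> Xs" and ys: "ys \<in> Gd (vf xs)"
    have yV: "ys i \<in> V" if "i < t" for i using ys that by (auto simp: Gd_def Xs_def)
    have "{i. i < t \<and> ys i \<in> Sv (vf xs)} = {i. i < t \<and> distN N (vf xs) (ys i) \<le> 1}"
      using yV by (auto simp: Sv_def)
    thus "(xs, ys) \<in> Bad" using xs ys vf[OF xs] by (auto simp: Bad_def C_def Gd_def)
  qed
  have "real (card (Sigma Xs (\<lambda>xs. Gd (vf xs)))) = (\<Sum>xs\<in>Xs. real (card (Gd (vf xs))))"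
    using fXs by (subst card_SigmaI) (auto simp: Gd_def intro: finite_subset)
  then have "2 * real (card (Sigma Xs (\<lambda>xs. Gd (vf xs)))) \<ge> (\<Sum>xs\<in>Xs. real (n ^ t))"
  proof -
    have "(\<Sum>xs\<in>Xs. real (n ^ t)) \<le> (\<Sum>xs\<in>Xs. 2 * real (card (Gd (vf xs))))"
      by (rule sum_mono) (use gd vf in blast)
    thus ?thesis using \<open>real (card (Sigma Xs (\<lambda>xs. Gd (vf xs)))) = _\<close> by (simp add: sum_distrib_left)
  qed
  also have "(\<Sum>xs\<in>Xs. real (n ^ t)) = real (card C)" using cXs cC by simp
  finally have lb: "real (card C) \<le> 2 * real (card Bad)"
    using card_mono[OF _ sig] fC by (smt (verit) Bad_def mem_Collect_eq of_nat_le_iff subsetI finite_subset)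
  define Cds where "Cds = ({..<t} \<times> (UNIV::bool set)) \<times> {L. set L \<subseteq> {..<t} \<times> (UNIV::bool set) \<and> length L \<le> M}"
  define Pk where "Pk \<kappa> = {c \<in> C. (\<forall>i<t. \<not> hyp N c \<kappa> (fst c i)) \<and> q \<le> card {i. i < t \<and> i \<notin> Ik \<kappa> \<and> hyp N c \<kappa> (snd c i)}}" for \<kappa>
  have fCds: "finite Cds" unfolding Cds_def by (intro finite_cartesian_product finite_lists_length_le) auto
  have bad_sub: "Bad \<subseteq> (\<Union>\<kappa>\<in>Cds. Pk \<kappa>)"
  proof
    fix c assume "c \<in> Bad"
    then obtain v where c: "c \<in> C" "v \<in> V" "\<forall>i<t. \<not> distN N (fst c i) v \<le> 1 + \<epsilon>"
      "q0 \<le> card {i. i < t \<and> distN N v (snd c i) \<le> 1}" by (auto simp: Bad_def)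
    from bad_code[OF e M c(3) c(4) q0] obtain \<kappa> where k: "fst (fst \<kappa>) < t" "set (snd \<kappa>) \<subseteq> {..<t} \<times> UNIV"
      "length (snd \<kappa>) \<le> M" "\<forall>i<t. \<not> hyp N c \<kappa> (fst c i)"
      "q \<le> card {i. i < t \<and> i \<notin> Ik \<kappa> \<and> hyp N c \<kappa> (snd c i)}" by blast
    have "\<kappa> \<in> Cds" using k unfolding Cds_def by (cases \<kappa>) auto
    moreover have "c \<in> Pk \<kappa>" using k c(1) by (simp add: Pk_def)
    ultimately show "c \<in> (\<Union>\<kappa>\<in>Cds. Pk \<kappa>)" by blast
  qed
  have pk: "card (Pk \<kappa>) * 2^q \<le> card C" for \<kappa>
    by (rule swap_count[where H="\<lambda>c. hyp N c \<kappa>" and U="{..<t} - Ik \<kappa>" and I="Ik \<kappa>" and V=V and t=t])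
       (auto simp: Pk_def C_def Xs_def fV intro!: hyp_sw)
  have "card Bad * 2^q \<le> card (\<Union>\<kappa>\<in>Cds. Pk \<kappa>) * 2^q"
    using bad_sub by (intro mult_le_mono1 card_mono) (auto simp: Pk_def fCds intro!: finite_UN_I intro: finite_subset[OF _ fC])
  also have "\<dots> \<le> (\<Sum>\<kappa>\<in>Cds. card (Pk \<kappa>)) * 2^q" by (intro mult_le_mono1 card_UN_le fCds)
  also have "\<dots> = (\<Sum>\<kappa>\<in>Cds. card (Pk \<kappa>) * 2^q)" by (simp add: sum_distrib_right)
  also have "\<dots> \<le> (\<Sum>\<kappa>\<in>Cds. card C)" by (intro sum_mono pk)
  also have "\<dots> = card Cds * card C" by simp
  finally have ub: "card Bad * 2^q \<le> card Cds * card C" .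
  have cpos: "card C > 0" using cC npos by simp
  have "real (card C) * 2^q \<le> 2 * real (card Bad) * 2^q" using lb by simp
  also have "\<dots> \<le> 2 * real (card Cds * card C)" using ub
    by (metis (mono_tags) mult.assoc mult_le_cancel_left_pos of_nat_le_iff of_nat_mult of_nat_numeral of_nat_power zero_less_numeral)
  finally have "real (card C) * 2^q \<le> real (card C) * (2 * real (card Cds))" by (simp add: mult_ac)
  hence "(2::real)^q \<le> 2 * real (card Cds)" using cpos by (simp add: mult_le_cancel_left_pos)
  hence "(2::nat)^q \<le> 2 * card Cds" by (metis of_nat_le_iff of_nat_mult of_nat_numeral of_nat_power)
  also have "\<dots> \<le> 2 * (2*t*((M+1)*(2*t)^M))" using card_codes[OF tpos, of M] unfolding Cds_def by simp
  also have "\<dots> = 4*t*(M+1)*(2*t)^M" by (simp only: mult.assoc)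
  also have "\<dots> < 2^q" by (rule arith_main[OF D1 L q q0 b t])
  finally show False by simp
qed



lemma t_bound:
  fixes M D :: nat
  assumes D: "D \<ge> 1" and L: "L' = 8*(M+2)*D + 16" and q: "q = (M+2)*L'" and q0: "q0 = q + M + 1"
    and b: "b = 2*q0*D" and t: "t = q0*b"
  shows "t \<le> 4608 * (M+2)^4 * D^3"
proof -
  define X where "X = (M+2)*D"
  have X1: "16 \<le> 16 * X" using D by (simp add: X_def)
  have "L' = 8*X + 16" by (simp add: L X_def algebra_simps)
  hence "L' \<le> 24*X" using X1 by linarith
  hence L24: "L' \<le> 24*(M+2)*D" by (simp add: X_def algebra_simps)
  have "(M+2)*1 \<le> (M+2)*L'" using L by (intro mult_le_mono2) simp
  hence h: "M + 1 \<le> (M+2)*L'" by simp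
  have "q0 \<le> (M+2)*L' + (M+2)*L'" using q0 q h by linarith
  also have "\<dots> \<le> (M+2)*(24*(M+2)*D) + (M+2)*(24*(M+2)*D)" using L24 by (intro add_mono mult_le_mono2)
  also have "\<dots> = 48*(M+2)^2*D" by (simp add: power2_eq_square algebra_simps)
  finally have q0b: "q0 \<le> 48*(M+2)^2*D" .
  have "t = 2*(q0*q0)*D" using t b by (simp add: algebra_simps)
  also have "\<dots> \<le> 2*((48*(M+2)^2*D)*(48*(M+2)^2*D))*D" using q0b by (intro mult_le_mono1 mult_le_mono2 mult_le_mono) auto
  also have "\<dots> = 4608 * (M+2)^4 * D^3" by (simp add: power_numeral_reduce power2_eq_square algebra_simps)
  finally show ?thesis .
qed

theorem lemma1p1:
  shows "\<exists>p. is_poly2 p \<and>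
    (\<forall>(N::nat) (\<delta>::real) (\<epsilon>::real) (V::(nat \<Rightarrow> real) set).
       N \<ge> 1 \<and> 0 < \<delta> \<and> \<delta> \<le> 1 \<and> 0 < \<epsilon> \<and>
       finite V \<and> V \<noteq> {} \<and> V \<subseteq> RN N \<and>
       (\<forall>v\<in>V. real (card (cballN N v 1 \<inter> V)) \<ge> \<delta> * real (card V))
       \<longrightarrow> (\<exists>X\<subseteq>V. real (card X) \<le> p (1/\<delta>) (1/\<epsilon>) \<and>
                  V \<subseteq> (\<Union>x\<in>X. cballN N x (1 + \<epsilon>))))"
proof (rule exI[of _ "\<lambda>a b. (4608 * 1003^4) * (a + 1) ^ 3 * (b + 1) ^ 8"], intro conjI allI impI)
  show "is_poly2 (\<lambda>a b. (4608 * 1003^4) * (a + 1) ^ 3 * (b + 1) ^ 8)" by (rule poly_is_poly2)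
  fix N :: nat and \<delta> \<epsilon> :: real and V :: "(nat \<Rightarrow> real) set"
  assume H: "N \<ge> 1 \<and> 0 < \<delta> \<and> \<delta> \<le> 1 \<and> 0 < \<epsilon> \<and> finite V \<and> V \<noteq> {} \<and> V \<subseteq> RN N \<and>
       (\<forall>v\<in>V. real (card (cballN N v 1 \<inter> V)) \<ge> \<delta> * real (card V))"
  hence d: "0 < \<delta>" "\<delta> \<le> 1" and e0: "0 < \<epsilon>" and fV: "finite V" and Vne: "V \<noteq> {}" and VR: "V \<subseteq> RN N"
    by auto
  define \<epsilon>' where "\<epsilon>' = min \<epsilon> 1"
  have e: "0 < \<epsilon>'" "\<epsilon>' \<le> 1" using e0 by (auto simp: \<epsilon>'_def)
  have dense: "\<forall>v\<in>V. real (card {u\<in>V. distN N v u \<le> 1}) \<ge> \<delta> * real (card V)"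
  proof
    fix v assume "v \<in> V"
    have "cballN N v 1 \<inter> V = {u\<in>V. distN N v u \<le> 1}" using VR by (auto simp: cballN_def)
    thus "real (card {u\<in>V. distN N v u \<le> 1}) \<ge> \<delta> * real (card V)" using H \<open>v \<in> V\<close> by auto
  qed
  define D where "D = nat \<lceil>1/\<delta>\<rceil>"
  define M where "M = nat \<lfloor>1001 / \<epsilon>'^2\<rfloor>"
  define L' where "L' = 8*(M+2)*D + 16"
  define q where "q = (M+2)*L'"
  define q0 where "q0 = q + M + 1"
  define b where "b = 2*q0*D"
  define t where "t = q0*b"
  have Dge: "real D \<ge> 1/\<delta>" unfolding D_def by linarith
  hence Dd: "real D * \<delta> \<ge> 1" using d by (simp add: field_simps)
  have D1: "D \<ge> 1" using Dd d by (cases "D = 0") auto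
  obtain xs where xs: "xs \<in> PiE {..<t} (\<lambda>_. V)" "\<forall>v\<in>V. \<exists>i<t. distN N (xs i) v \<le> 1 + \<epsilon>'"
    using main_cover[OF fV Vne d e dense M_def Dd L'_def q_def q0_def b_def t_def] by blast
  show "\<exists>X\<subseteq>V. real (card X) \<le> (4608 * 1003^4) * (1/\<delta> + 1) ^ 3 * (1/\<epsilon> + 1) ^ 8 \<and>
                  V \<subseteq> (\<Union>x\<in>X. cballN N x (1 + \<epsilon>))"
  proof (intro exI[of _ "xs ` {..<t}"] conjI)
    show "xs ` {..<t} \<subseteq> V" using xs(1) by (auto simp: PiE_def Pi_def)
    show "V \<subseteq> (\<Union>x\<in>xs ` {..<t}. cballN N x (1 + \<epsilon>))"
    proof
      fix v assume v: "v \<in> V"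
      then obtain i where i: "i < t" "distN N (xs i) v \<le> 1 + \<epsilon>'" using xs(2) by blast
      have "distN N (xs i) v \<le> 1 + \<epsilon>" using i(2) by (simp add: \<epsilon>'_def)
      hence "v \<in> cballN N (xs i) (1 + \<epsilon>)" using v VR by (auto simp: cballN_def)
      thus "v \<in> (\<Union>x\<in>xs ` {..<t}. cballN N x (1 + \<epsilon>))" using i by blast
    qed
    have "real (card (xs ` {..<t})) \<le> real t" using card_image_le[of "{..<t}" xs] by simp
    also have "\<dots> \<le> 4608 * real (M+2)^4 * real D^3"
    proof -
      have "real t \<le> real (4608 * (M+2)^4 * D^3)"
        using t_bound[OF D1 L'_def q_def q0_def b_def t_def] by (simp only: of_nat_le_iff)
      thus ?thesis by simp
    qed
    also have "\<dots> \<le> 4608 * (1003 * (1/\<epsilon> + 1)^2)^4 * (1/\<delta> + 1)^3"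
    proof (intro mult_mono power_mono)
      have ie: "1/\<epsilon>' \<le> 1/\<epsilon> + 1" using e0 by (auto simp: \<epsilon>'_def min_def field_simps)
      have "1/\<epsilon>'^2 = (1/\<epsilon>')^2" by (simp add: power_divide)
      also have "\<dots> \<le> (1/\<epsilon> + 1)^2" using ie e by (intro power_mono) auto
      finally have ie2: "1/\<epsilon>'^2 \<le> (1/\<epsilon> + 1)^2" .
      have "real M = of_int \<lfloor>1001 / \<epsilon>'^2\<rfloor>" unfolding M_def using e by simp
      also have "\<dots> \<le> 1001 / \<epsilon>'^2" by (rule of_int_floor_le)
      finally have "real M \<le> 1001 * (1/\<epsilon>'^2)" by simp
      also have "\<dots> \<le> 1001 * (1/\<epsilon> + 1)^2" using ie2 by simp
      finally have m: "real M \<le> 1001 * (1/\<epsilon> + 1)^2" .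
      have "1 \<le> (1/\<epsilon> + 1)^2" using e0 by (intro one_le_power) simp
      thus "real (M+2) \<le> 1003 * (1/\<epsilon> + 1)^2" using m by simp
      have "real D = of_int \<lceil>1/\<delta>\<rceil>" using d by (simp add: D_def)
      thus "real D \<le> 1/\<delta> + 1" using of_int_ceiling_le_add_one[of "1/\<delta>"] by simp
    qed (auto)
    also have "\<dots> = (4608 * 1003^4) * (1/\<delta> + 1) ^ 3 * (1/\<epsilon> + 1) ^ 8"
      by (simp add: power_mult_distrib power_mult[symmetric] mult_ac)
    finally show "real (card (xs ` {..<t})) \<le> (4608 * 1003^4) * (1/\<delta> + 1) ^ 3 * (1/\<epsilon> + 1) ^ 8" .
  qed
qed

end
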